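(* Let $g\in\mathcal{P}(\mathbb{R})$, $\beta,\sigma>0$ and $\gamma:=\beta+\sigma^2/2$. There is a constant $C(\beta,\sigma)$ such that for all $z\in\mathbb{C}$ with $\Re(z)\in[0,\beta]$, $$|P(z)|+|P'(z)|\le\Big(1+\int_{\mathbb{R}}\omega^2g(\mathrm{d}\omega)\Big)\frac{C(\beta,\sigma)}{|\Im(z)|^2}.$$
   Context: For $z\in\mathbb{C}$ with $\Re(z)\in(-\sigma^2/2,\gamma)$, $P(z):=\int_{\mathbb{R}}\frac{g(\mathrm{d}\omega)}{(\gamma+i\omega-z)(\frac{\sigma^2}{2}+z-i\omega)}$ (a holomorphic function on this strip), and $P'$ denotes its complex derivative. *)

theory Defs
  imports "HOL-Probability.Probability"
begin

definition gam :: "real \<Rightarrow> real \<Rightarrow> real" where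
  "gam \<beta> \<sigma> = \<beta> + \<sigma>\<^sup>2 / 2"

definition Pfun :: "real measure \<Rightarrow> real \<Rightarrow> real \<Rightarrow> complex \<Rightarrow> complex" where
  "Pfun g \<beta> \<sigma> z = (LINT \<omega>|g.
     1 / ((complex_of_real (gam \<beta> \<sigma>) + \<i> * complex_of_real \<omega> - z) *
          (complex_of_real (\<sigma>\<^sup>2 / 2) + z - \<i> * complex_of_real \<omega>)))"

end

theory Submission imports Defs begin

lemma int_bdd:
  fixes f :: "real \<Rightarrow> complex"
  assumes "prob_space g" "sets g = sets borel" "f \<in> borel_measurable borel" "\<And>\<omega>. norm (f \<omega>) \<le> c"
  shows "integrable g f"
proof -
  interpret prob_space g by fact
  have "f \<in> borel_measurable g" using assms(3) by (simp add: measurable_cong_sets[OF assms(2) refl])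
  then show ?thesis using assms(4) by (intro integrable_const_bound[where B=c]) auto
qed

lemma int_norm_le:
  fixes f :: "real \<Rightarrow> complex"
  assumes "prob_space g" "sets g = sets borel" "f \<in> borel_measurable borel" "\<And>\<omega>. norm (f \<omega>) \<le> c"
  shows "norm (LINT \<omega>|g. f \<omega>) \<le> c"
proof -
  interpret prob_space g by fact
  have m: "f \<in> borel_measurable g" using assms(3) by (simp add: measurable_cong_sets[OF assms(2) refl])
  have "norm (LINT \<omega>|g. f \<omega>) \<le> (LINT \<omega>|g. norm (f \<omega>))" by (rule integral_norm_bound)
  also have "\<dots> \<le> (LINT \<omega>|g. c)"
    using assms(4) m by (intro integral_mono integrable_const_bound[where B=c] integrable_norm int_bdd[OF assms]) (auto intro: order_trans[OF norm_ge_zero])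
  also have "\<dots> = c" by (simp add: prob_space)
  finally show ?thesis .
qed

lemma re_bound:
  fixes u :: complex
  assumes "r \<le> Re u" "0 < r"
  shows "r \<le> cmod u" "u \<noteq> 0"
  using abs_Re_le_cmod[of u] assms by auto

lemma nb: fixes u :: complex assumes "0 < c" "c \<le> cmod u" shows "cmod (1/u) \<le> 1/c"
  using frac_le[of 1 1 c "cmod u"] assms by (simp add: norm_divide)
lemma nb2: fixes u :: complex assumes "0 < c" "c \<le> cmod u" shows "cmod (1/u^2) \<le> (1/c)^2"
proof -
  have "cmod (1/u^2) = cmod (1/u)^2" by (simp add: norm_divide norm_power power_one_over)
  also have "\<dots> \<le> (1/c)^2" using nb[OF assms] by (intro power_mono) auto
  finally show ?thesis .
qed
lemma nb3: fixes u v :: complex assumes "0 < c" "c \<le> cmod u" "c \<le> cmod v" shows "cmod (1/(u * v^2)) \<le> (1/c)^3"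
proof -
  have "cmod (1/(u * v^2)) = cmod (1/u) * cmod (1/v^2)" by (simp add: norm_divide norm_mult)
  also have "\<dots> \<le> (1/c) * (1/c)^2" using nb[OF assms(1,2)] nb2[OF assms(1,3)] assms(1) by (intro mult_mono) auto
  also have "\<dots> = (1/c)^3" by (simp add: power3_eq_cube power2_eq_square)
  finally show ?thesis .
qed
lemma pq: fixes p q :: complex assumes "p \<noteq> 0" "q \<noteq> 0"
  shows "1/p - 1/q - (q - p) * (1/q^2) = (q - p)^2 * (1/(p * q^2))"
  using assms by (simp add: field_simps power2_eq_square)
lemma remid: fixes A B w z :: complex assumes "A - w \<noteq> 0" "B + w \<noteq> 0" "A - z \<noteq> 0" "B + z \<noteq> 0"
  shows "(1/(A-w) + 1/(B+w)) - (1/(A-z) + 1/(B+z)) - (w - z) * (1/(A-z)^2 - 1/(B+z)^2) =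
     (w - z)\<^sup>2 * (1 / ((A - w) * (A - z)\<^sup>2) + 1 / ((B + w) * (B + z)\<^sup>2))"
proof -
  have 1: "1/(A-w) - 1/(A-z) - (w - z) * (1/(A-z)^2) = (w - z)\<^sup>2 * (1 / ((A - w) * (A - z)\<^sup>2))"
    using pq[OF assms(1,3)] by simp
  have 2: "1/(B+w) - 1/(B+z) - (z - w) * (1/(B+z)^2) = (z - w)\<^sup>2 * (1 / ((B + w) * (B + z)\<^sup>2))"
    using pq[OF assms(2,4)] by simp
  have 3: "(z - w)\<^sup>2 = (w - z)\<^sup>2" by (simp add: power2_commute)
  have "(1/(A-w) + 1/(B+w)) - (1/(A-z) + 1/(B+z)) - (w - z) * (1/(A-z)^2 - 1/(B+z)^2)
     = (1/(A-w) - 1/(A-z) - (w - z) * (1/(A-z)^2)) + (1/(B+w) - 1/(B+z) - (z - w) * (1/(B+z)^2))"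
    by (simp add: algebra_simps add_divide_distrib[symmetric])
  also have "\<dots> = (w - z)\<^sup>2 * (1 / ((A - w) * (A - z)\<^sup>2) + 1 / ((B + w) * (B + z)\<^sup>2))"
    unfolding 1 2 3 by (simp add: distrib_left)
  finally show ?thesis .
qed
lemma quot: fixes X Y I h K :: complex assumes "h \<noteq> 0" "K \<noteq> 0"
  shows "(X/K - Y/K)/h - I/K = (X - Y - h*I)/(h*K)"
  using assms by (simp add: field_simps)
lemma quot2: fixes d c K :: real assumes "d > 0" 
  shows "d\<^sup>2 * c / (d * K) = c / K * d"
  using assms by (simp add: power2_eq_square)

lemma deriv_P:
  fixes \<beta> \<sigma> :: real and z :: complex
  assumes pg: "prob_space g" and sg: "sets g = sets borel" and b: "\<beta> > 0" and s: "\<sigma> > 0"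
    and z0: "0 \<le> Re z" and z1: "Re z \<le> \<beta>"
  defines "a \<equiv> \<sigma>\<^sup>2 / 2" and "K \<equiv> \<beta> + \<sigma>\<^sup>2"
  defines "Af \<equiv> (\<lambda>\<omega>::real. complex_of_real (gam \<beta> \<sigma>) + \<i> * complex_of_real \<omega>)"
     and "Bf \<equiv> (\<lambda>\<omega>::real. complex_of_real a - \<i> * complex_of_real \<omega>)"
  shows "(Pfun g \<beta> \<sigma> has_field_derivative
           (LINT \<omega>|g. 1 / (Af \<omega> - z)\<^sup>2 - 1 / (Bf \<omega> + z)\<^sup>2) / K) (at z)"
proof -
  have a0: "a > 0" using s by (simp add: a_def)
  have K0: "K > 0" using b s by (auto simp: K_def intro!: add_pos_pos)
  have gamK: "gam \<beta> \<sigma> + a = K" by (simp add: gam_def a_def K_def)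
  define S where "S = {w::complex. - a / 2 \<le> Re w \<and> Re w \<le> \<beta> + a / 2}"
  have zS: "z \<in> S" using z0 z1 a0 by (simp add: S_def)
  have lbA: "a / 2 \<le> cmod (Af \<omega> - w)" "Af \<omega> - w \<noteq> 0" if "w \<in> S" for w \<omega>
    using that a0 re_bound[of "a/2" "Af \<omega> - w"] by (auto simp: S_def Af_def gam_def a_def)
  have lbB: "a / 2 \<le> cmod (Bf \<omega> + w)" "Bf \<omega> + w \<noteq> 0" if "w \<in> S" for w \<omega>
    using that a0 re_bound[of "a/2" "Bf \<omega> + w"] by (auto simp: S_def Bf_def a_def)
  define H where "H = (\<lambda>\<omega> w. 1 / (Af \<omega> - w) + 1 / (Bf \<omega> + w))"
  define D where "D = (\<lambda>\<omega>. 1 / (Af \<omega> - z)\<^sup>2 - 1 / (Bf \<omega> + z)\<^sup>2)"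
  have sumK: "(Af \<omega> - w) + (Bf \<omega> + w) = complex_of_real K" for \<omega> w
    using gamK[symmetric] by (simp add: Af_def Bf_def)
  have pf: "1 / ((Af \<omega> - w) * (Bf \<omega> + w)) = H \<omega> w / complex_of_real K" if "w \<in> S" for \<omega> w
  proof -
    have "H \<omega> w = ((Af \<omega> - w) + (Bf \<omega> + w)) / ((Af \<omega> - w) * (Bf \<omega> + w))"
      using lbA(2)[OF that] lbB(2)[OF that] by (simp add: H_def field_simps)
    then show ?thesis using K0 by (simp add: sumK)
  qed
  have Pw: "Pfun g \<beta> \<sigma> w = (LINT \<omega>|g. H \<omega> w) / complex_of_real K" if "w \<in> S" for w
  proof -
    have "Pfun g \<beta> \<sigma> w = (LINT \<omega>|g. H \<omega> w / complex_of_real K)"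
      unfolding Pfun_def using pf[OF that]
      by (intro Bochner_Integration.integral_cong) (auto simp: Af_def Bf_def a_def algebra_simps)
    then show ?thesis by (simp add: integral_divide_zero)
  qed
  have measH: "(\<lambda>\<omega>. H \<omega> w) \<in> borel_measurable borel" for w
    unfolding H_def Af_def Bf_def by measurable
  have measD: "D \<in> borel_measurable borel"
    unfolding D_def Af_def Bf_def by measurable
  have boundH: "norm (H \<omega> w) \<le> 4 / a" if "w \<in> S" for \<omega> w
  proof -
    have "norm (1 / (Af \<omega> - w)) \<le> 2 / a" using nb[OF _ lbA(1)[OF that, of \<omega>]] a0 by simp
    moreover have "norm (1 / (Bf \<omega> + w)) \<le> 2 / a" using nb[OF _ lbB(1)[OF that, of \<omega>]] a0 by simp
    ultimately show ?thesis unfolding H_def using norm_triangle_ineq[of "1 / (Af \<omega> - w)" "1 / (Bf \<omega> + w)"] by linarith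
  qed
  have intH: "integrable g (\<lambda>\<omega>. H \<omega> w)" if "w \<in> S" for w
    by (rule int_bdd[OF pg sg measH boundH[OF that]])
  have boundD: "norm (D \<omega>) \<le> 8 / a\<^sup>2" for \<omega>
  proof -
    have "norm (1 / (Af \<omega> - z)\<^sup>2) \<le> 4 / a\<^sup>2" using nb2[OF _ lbA(1)[OF zS, of \<omega>]] a0 by (simp add: power_divide)
    moreover have "norm (1 / (Bf \<omega> + z)\<^sup>2) \<le> 4 / a\<^sup>2" using nb2[OF _ lbB(1)[OF zS, of \<omega>]] a0 by (simp add: power_divide)
    ultimately show ?thesis unfolding D_def using norm_triangle_ineq4[of "1 / (Af \<omega> - z)\<^sup>2" "1 / (Bf \<omega> + z)\<^sup>2"] by linarith
  qed
  have intD: "integrable g D" by (rule int_bdd[OF pg sg measD boundD])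
  have remid: "H \<omega> w - H \<omega> z - (w - z) * D \<omega> =
     (w - z)\<^sup>2 * (1 / ((Af \<omega> - w) * (Af \<omega> - z)\<^sup>2) + 1 / ((Bf \<omega> + w) * (Bf \<omega> + z)\<^sup>2))"
    if "w \<in> S" for w \<omega>
    using lbA(2)[OF that, of \<omega>] lbB(2)[OF that, of \<omega>] lbA(2)[OF zS, of \<omega>] lbB(2)[OF zS, of \<omega>]
    unfolding H_def D_def by (rule remid)
  have rembound: "norm (H \<omega> w - H \<omega> z - (w - z) * D \<omega>) \<le> (cmod (w - z))\<^sup>2 * (16 / a ^ 3)"
    if "w \<in> S" for w \<omega>
  proof -
    have e1: "norm (1 / ((Af \<omega> - w) * (Af \<omega> - z)\<^sup>2)) \<le> 8 / a ^ 3"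
      using nb3[OF _ lbA(1)[OF that, of \<omega>] lbA(1)[OF zS, of \<omega>]] a0 by (simp add: power_divide)
    have e2: "norm (1 / ((Bf \<omega> + w) * (Bf \<omega> + z)\<^sup>2)) \<le> 8 / a ^ 3"
      using nb3[OF _ lbB(1)[OF that, of \<omega>] lbB(1)[OF zS, of \<omega>]] a0 by (simp add: power_divide)
    have "norm (1 / ((Af \<omega> - w) * (Af \<omega> - z)\<^sup>2) + 1 / ((Bf \<omega> + w) * (Bf \<omega> + z)\<^sup>2)) \<le> 16 / a ^ 3"
      using e1 e2 norm_triangle_ineq[of "1 / ((Af \<omega> - w) * (Af \<omega> - z)\<^sup>2)" "1 / ((Bf \<omega> + w) * (Bf \<omega> + z)\<^sup>2)"] by linarith
    then show ?thesis unfolding remid[OF that] norm_mult norm_power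
      by (intro mult_left_mono) auto
  qed
  have intrem: "norm ((LINT \<omega>|g. H \<omega> w) - (LINT \<omega>|g. H \<omega> z) - (w - z) * (LINT \<omega>|g. D \<omega>))
       \<le> (cmod (w - z))\<^sup>2 * (16 / a ^ 3)" if "w \<in> S" for w
  proof -
    have "(LINT \<omega>|g. H \<omega> w) - (LINT \<omega>|g. H \<omega> z) - (w - z) * (LINT \<omega>|g. D \<omega>)
        = (LINT \<omega>|g. H \<omega> w - H \<omega> z - (w - z) * D \<omega>)"
      using intH[OF that] intH[OF zS] intD by simp
    also have "norm \<dots> \<le> (cmod (w - z))\<^sup>2 * (16 / a ^ 3)"
      using measH measD rembound[OF that] by (intro int_norm_le[OF pg sg]) auto
    finally show ?thesis .
  qed
  define Dz where "Dz = (LINT \<omega>|g. D \<omega>) / complex_of_real K"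
  have ev: "\<forall>\<^sub>F w in at z. norm ((Pfun g \<beta> \<sigma> w - Pfun g \<beta> \<sigma> z) / (w - z) - Dz)
              \<le> 16 / (a ^ 3 * K) * cmod (w - z)"
    unfolding eventually_at
  proof (intro exI[of _ "a/2"] conjI ballI impI)
    show "0 < a / 2" using a0 by simp
    fix w assume w: "w \<in> UNIV" "w \<noteq> z \<and> dist w z < a / 2"
    have "\<bar>Re w - Re z\<bar> \<le> cmod (w - z)" using abs_Re_le_cmod[of "w - z"] by simp
    then have wS: "w \<in> S" using w z0 z1 by (auto simp: S_def dist_norm)
    have wz: "w - z \<noteq> 0" "cmod (w - z) > 0" using w by auto
    have "(Pfun g \<beta> \<sigma> w - Pfun g \<beta> \<sigma> z) / (w - z) - Dz =
        ((LINT \<omega>|g. H \<omega> w) - (LINT \<omega>|g. H \<omega> z) - (w - z) * (LINT \<omega>|g. D \<omega>)) / ((w - z) * complex_of_real K)"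
      unfolding Pw[OF wS] Pw[OF zS] Dz_def using wz K0 by (intro quot) auto
    also have "norm \<dots> \<le> (cmod (w - z))\<^sup>2 * (16 / a ^ 3) / (cmod (w - z) * K)"
      unfolding norm_divide norm_mult norm_of_real abs_of_pos[OF K0] using K0 wz intrem[OF wS]
      by (intro divide_right_mono) auto
    also have "\<dots> = 16 / (a ^ 3 * K) * cmod (w - z)"
      by (simp only: quot2[OF wz(2)] divide_divide_eq_left)
    finally show "norm ((Pfun g \<beta> \<sigma> w - Pfun g \<beta> \<sigma> z) / (w - z) - Dz) \<le> 16 / (a ^ 3 * K) * cmod (w - z)" .
  qed
  have lim0: "((\<lambda>w. 16 / (a ^ 3 * K) * cmod (w - z)) \<longlongrightarrow> 0) (at z)"
  proof -
    have "((\<lambda>w. w - z) \<longlongrightarrow> 0) (at z)" using LIM_zero[OF tendsto_ident_at] .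
    then have "((\<lambda>w. cmod (w - z)) \<longlongrightarrow> 0) (at z)" by (rule tendsto_norm_zero)
    then show ?thesis by (rule tendsto_mult_right_zero)
  qed
  have "((\<lambda>w. (Pfun g \<beta> \<sigma> w - Pfun g \<beta> \<sigma> z) / (w - z) - Dz) \<longlongrightarrow> 0) (at z)"
    by (rule Lim_null_comparison[OF ev lim0])
  then have "((\<lambda>w. (Pfun g \<beta> \<sigma> w - Pfun g \<beta> \<sigma> z) / (w - z)) \<longlongrightarrow> Dz) (at z)"
    by (simp add: LIM_zero_iff)
  then show ?thesis unfolding has_field_derivative_iff Dz_def D_def .
qed


lemma lbm: fixes u :: complex assumes "0 < a" "a \<le> Re u" "\<bar>Im u\<bar> = \<bar>t\<bar>"
  shows "sqrt (a\<^sup>2 + t\<^sup>2) \<le> cmod u"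
proof -
  have "a\<^sup>2 \<le> (Re u)\<^sup>2" using assms by (intro power_mono) auto
  moreover have "t\<^sup>2 = (Im u)\<^sup>2" using assms(3) by (metis power2_abs)
  ultimately have "a\<^sup>2 + t\<^sup>2 \<le> (Re u)\<^sup>2 + (Im u)\<^sup>2" by simp
  then show ?thesis unfolding cmod_def by (rule real_sqrt_le_mono)
qed

lemma pw: fixes u v w :: complex
  assumes a: "0 < a" and K: "0 < K"
    and u: "a \<le> Re u" "\<bar>Im u\<bar> = \<bar>t\<bar>" and v: "a \<le> Re v" "\<bar>Im v\<bar> = \<bar>t\<bar>"
    and w: "a \<le> Re w" "\<bar>Im w\<bar> = \<bar>t\<bar>"
  shows "cmod (1 / (u * v)) + cmod (1 / u\<^sup>2 - 1 / w\<^sup>2) / K \<le> (1 + 2 / K) / (a\<^sup>2 + t\<^sup>2)"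
proof -
  define m where "m = sqrt (a\<^sup>2 + t\<^sup>2)"
  have m2: "m\<^sup>2 = a\<^sup>2 + t\<^sup>2" unfolding m_def by simp
  have m0: "0 < m" unfolding m_def using a by (simp add: add_pos_nonneg)
  have mu: "m \<le> cmod u" "m \<le> cmod v" "m \<le> cmod w"
    unfolding m_def using lbm[OF a u] lbm[OF a v] lbm[OF a w] by auto
  have i: "(1/m)\<^sup>2 = 1 / (a\<^sup>2 + t\<^sup>2)" using m2 by (simp add: power_divide)
  have "cmod (1 / (u * v)) = cmod (1/u) * cmod (1/v)" by (simp add: norm_divide norm_mult)
  also have "\<dots> \<le> (1/m) * (1/m)" using nb[OF m0 mu(1)] nb[OF m0 mu(2)] m0 by (intro mult_mono) auto
  finally have 1: "cmod (1 / (u * v)) \<le> 1 / (a\<^sup>2 + t\<^sup>2)" using i by (simp add: power2_eq_square)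
  have "cmod (1 / u\<^sup>2 - 1 / w\<^sup>2) \<le> cmod (1 / u\<^sup>2) + cmod (1 / w\<^sup>2)" by (rule norm_triangle_ineq4)
  also have "\<dots> \<le> (1/m)\<^sup>2 + (1/m)\<^sup>2" using nb2[OF m0 mu(1)] nb2[OF m0 mu(3)] by linarith
  finally have "cmod (1 / u\<^sup>2 - 1 / w\<^sup>2) \<le> 2 / (a\<^sup>2 + t\<^sup>2)" using i by simp
  then have "cmod (1 / u\<^sup>2 - 1 / w\<^sup>2) / K \<le> (2 / (a\<^sup>2 + t\<^sup>2)) / K"
    using K by (intro divide_right_mono) auto
  then have 2: "cmod (1 / u\<^sup>2 - 1 / w\<^sup>2) / K \<le> (2 / K) / (a\<^sup>2 + t\<^sup>2)"
    by (simp add: divide_divide_eq_left ac_simps)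
  show ?thesis using 1 2 by (simp add: add_divide_distrib)
qed

lemma keyineq: fixes a y \<omega> :: real assumes a: "0 < a" and y: "y \<noteq> 0"
  shows "1 / (a\<^sup>2 + (\<omega> - y)\<^sup>2) \<le> (2 + 2 / a\<^sup>2) / y\<^sup>2 * (1 + \<omega>\<^sup>2)"
proof -
  define m where "m = a\<^sup>2 + (\<omega> - y)\<^sup>2"
  define P where "P = (1 + \<omega>\<^sup>2) * m"
  have m0: "0 < m" using a unfolding m_def by (simp add: add_pos_nonneg)
  have a2: "0 < a\<^sup>2" using a by simp
  have y2: "0 < y\<^sup>2" using y by simp
  have e1: "2 * \<omega>\<^sup>2 + 2 * (\<omega> - y)\<^sup>2 - y\<^sup>2 = (2 * \<omega> - y)\<^sup>2"
    by (simp add: power2_eq_square algebra_simps)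
  have t1: "y\<^sup>2 \<le> 2 * \<omega>\<^sup>2 + 2 * (\<omega> - y)\<^sup>2"
    using e1 zero_le_power2[of "2 * \<omega> - y"] by linarith
  have t2: "(\<omega> - y)\<^sup>2 \<le> m" unfolding m_def by simp
  have t3: "m \<le> P" unfolding P_def using m0 mult_right_mono[of 1 "1 + \<omega>\<^sup>2" m] by simp
  have t4: "2 * \<omega>\<^sup>2 = (2 / a\<^sup>2) * (\<omega>\<^sup>2 * a\<^sup>2)" using a2 by simp
  have t5: "\<omega>\<^sup>2 * a\<^sup>2 \<le> P"
    unfolding P_def m_def using a2 by (intro mult_mono) auto
  have t6: "(2 / a\<^sup>2) * (\<omega>\<^sup>2 * a\<^sup>2) \<le> (2 / a\<^sup>2) * P"
    using t5 a2 by (intro mult_left_mono) auto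
  have "y\<^sup>2 \<le> (2 / a\<^sup>2) * P + 2 * P"
    using t1 t2 t3 t4 t6 by linarith
  also have "\<dots> = (2 + 2 / a\<^sup>2) * (1 + \<omega>\<^sup>2) * m" unfolding P_def by (simp add: algebra_simps)
  finally have yy: "y\<^sup>2 \<le> (2 + 2 / a\<^sup>2) * (1 + \<omega>\<^sup>2) * m" .
  have "1 / m \<le> (2 + 2 / a\<^sup>2) * (1 + \<omega>\<^sup>2) / y\<^sup>2"
    using yy m0 y2 by (simp add: le_divide_eq divide_le_eq mult.commute)
  then show ?thesis unfolding m_def by simp
qed

theorem lemma5p3:
  fixes \<beta> \<sigma> :: real
  assumes "\<beta> > 0" and "\<sigma> > 0"
  shows "\<exists>C::real. \<forall>g::real measure. \<forall>z::complex.
           prob_space g \<longrightarrow> sets g = sets borel \<longrightarrow>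
           0 \<le> Re z \<longrightarrow> Re z \<le> \<beta> \<longrightarrow> Im z \<noteq> 0 \<longrightarrow>
           ennreal (cmod (Pfun g \<beta> \<sigma> z) + cmod (deriv (Pfun g \<beta> \<sigma>) z))
             \<le> (1 + (\<integral>\<^sup>+ \<omega>. ennreal (\<omega>\<^sup>2) \<partial>g)) * ennreal (C / \<bar>Im z\<bar>\<^sup>2)"
proof -
  define a where "a = \<sigma>\<^sup>2 / 2"
  define K where "K = \<beta> + \<sigma>\<^sup>2"
  define C where "C = (1 + 2 / K) * (2 + 2 / a\<^sup>2)"
  have a0: "0 < a" using assms by (simp add: a_def)
  have K0: "0 < K" using assms by (auto simp: K_def intro!: add_pos_pos)
  show ?thesis
  proof (intro exI[of _ C] allI impI)
    fix g :: "real measure" and z :: complex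
    assume pg: "prob_space g" and sg: "sets g = sets borel" and z0: "0 \<le> Re z"
      and z1: "Re z \<le> \<beta>" and y0: "Im z \<noteq> 0"
    interpret prob_space g by fact
    have mg: "h \<in> borel_measurable g \<longleftrightarrow> h \<in> borel_measurable borel" for h :: "real \<Rightarrow> 'b::topological_space"
      by (simp add: measurable_cong_sets[OF sg refl])
    define f where "f = (\<lambda>\<omega>::real. 1 / ((complex_of_real (gam \<beta> \<sigma>) + \<i> * complex_of_real \<omega> - z) *
          (complex_of_real (\<sigma>\<^sup>2 / 2) + z - \<i> * complex_of_real \<omega>)))"
    define D where "D = (\<lambda>\<omega>::real. 1 / (complex_of_real (gam \<beta> \<sigma>) + \<i> * complex_of_real \<omega> - z)\<^sup>2
          - 1 / (complex_of_real (\<sigma>\<^sup>2 / 2) - \<i> * complex_of_real \<omega> + z)\<^sup>2)"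
    have Pz: "Pfun g \<beta> \<sigma> z = integral\<^sup>L g f" unfolding Pfun_def f_def ..
    have dz: "deriv (Pfun g \<beta> \<sigma>) z = integral\<^sup>L g D / complex_of_real K"
      using DERIV_imp_deriv[OF deriv_P[OF pg sg assms z0 z1]] unfolding D_def K_def by simp
    define G where "G = (\<lambda>\<omega>. cmod (f \<omega>) + cmod (D \<omega>) / K)"
    have Gb: "G \<omega> \<le> (1 + 2 / K) / (a\<^sup>2 + (\<omega> - Im z)\<^sup>2)" for \<omega>
      unfolding G_def f_def D_def
      by (rule pw[OF a0 K0, where t = "\<omega> - Im z"]) (use z0 z1 in \<open>auto simp: gam_def a_def abs_minus_commute\<close>)
    have G2: "G \<omega> \<le> C / (Im z)\<^sup>2 * (1 + \<omega>\<^sup>2)" for \<omega>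
    proof -
      have "(1 + 2 / K) / (a\<^sup>2 + (\<omega> - Im z)\<^sup>2) = (1 + 2 / K) * (1 / (a\<^sup>2 + (\<omega> - Im z)\<^sup>2))" by simp
      also have "\<dots> \<le> (1 + 2 / K) * ((2 + 2 / a\<^sup>2) / (Im z)\<^sup>2 * (1 + \<omega>\<^sup>2))"
        using keyineq[OF a0 y0, of \<omega>] K0 by (intro mult_left_mono) auto
      also have "\<dots> = C / (Im z)\<^sup>2 * (1 + \<omega>\<^sup>2)" unfolding C_def by simp
      finally show ?thesis using Gb[of \<omega>] by linarith
    qed
    have Gbdd: "G \<omega> \<le> (1 + 2 / K) / a\<^sup>2" for \<omega>
    proof -
      have "(1 + 2 / K) / (a\<^sup>2 + (\<omega> - Im z)\<^sup>2) \<le> (1 + 2 / K) / a\<^sup>2"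
        using a0 K0 by (intro divide_left_mono) (auto intro!: mult_pos_pos add_pos_nonneg)
      then show ?thesis using Gb[of \<omega>] by linarith
    qed
    have measf: "f \<in> borel_measurable borel" unfolding f_def by measurable
    have measD: "D \<in> borel_measurable borel" unfolding D_def by measurable
    have fb: "cmod (f \<omega>) \<le> (1 + 2 / K) / a\<^sup>2" for \<omega>
      using Gbdd[of \<omega>] K0 unfolding G_def by (smt (verit) divide_nonneg_pos norm_ge_zero)
    have Db: "cmod (D \<omega>) \<le> K * ((1 + 2 / K) / a\<^sup>2)" for \<omega>
    proof -
      have "cmod (D \<omega>) / K \<le> (1 + 2 / K) / a\<^sup>2" using Gbdd[of \<omega>] unfolding G_def
        using norm_ge_zero[of "f \<omega>"] by linarith
      then show ?thesis using K0 by (simp add: divide_le_eq mult.commute)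
    qed
    have intf: "integrable g f" by (rule int_bdd[OF pg sg measf fb])
    have intD: "integrable g D" by (rule int_bdd[OF pg sg measD Db])
    have intG: "integrable g G" unfolding G_def using intf intD by auto
    have "cmod (Pfun g \<beta> \<sigma> z) \<le> (LINT \<omega>|g. cmod (f \<omega>))" unfolding Pz by (rule integral_norm_bound)
    moreover have "cmod (deriv (Pfun g \<beta> \<sigma>) z) \<le> (LINT \<omega>|g. cmod (D \<omega>)) / K"
    proof -
      have "cmod (deriv (Pfun g \<beta> \<sigma>) z) = cmod (integral\<^sup>L g D) / K"
        unfolding dz norm_divide norm_of_real using K0 by simp
      also have "\<dots> \<le> (LINT \<omega>|g. cmod (D \<omega>)) / K"
        using K0 by (intro divide_right_mono integral_norm_bound) auto
      finally show ?thesis .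
    qed
    moreover have "integral\<^sup>L g G = (LINT \<omega>|g. cmod (f \<omega>)) + (LINT \<omega>|g. cmod (D \<omega>)) / K"
      unfolding G_def using intf intD by (simp add: integral_divide_zero)
    ultimately have le1: "cmod (Pfun g \<beta> \<sigma> z) + cmod (deriv (Pfun g \<beta> \<sigma>) z) \<le> integral\<^sup>L g G"
      by linarith
    have measG: "G \<in> borel_measurable borel" unfolding G_def using measf measD by measurable
    have "ennreal (cmod (Pfun g \<beta> \<sigma> z) + cmod (deriv (Pfun g \<beta> \<sigma>) z)) \<le> ennreal (integral\<^sup>L g G)"
      using le1 by (rule ennreal_leI)
    also have "\<dots> = (\<integral>\<^sup>+ \<omega>. ennreal (G \<omega>) \<partial>g)"
      by (rule nn_integral_eq_integral[symmetric]) (use intG K0 in \<open>auto simp: G_def intro!: add_nonneg_nonneg divide_nonneg_pos\<close>)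
    also have "\<dots> \<le> (\<integral>\<^sup>+ \<omega>. ennreal (C / \<bar>Im z\<bar>\<^sup>2) * (1 + ennreal (\<omega>\<^sup>2)) \<partial>g)"
    proof (rule nn_integral_mono)
      fix \<omega>
      have "ennreal (G \<omega>) \<le> ennreal (C / (Im z)\<^sup>2 * (1 + \<omega>\<^sup>2))" using G2 by (rule ennreal_leI)
      also have "\<dots> = ennreal (C / \<bar>Im z\<bar>\<^sup>2) * (1 + ennreal (\<omega>\<^sup>2))"
      proof -
        have C0: "0 \<le> C / (Im z)\<^sup>2" unfolding C_def using K0 a0 by (intro divide_nonneg_pos mult_nonneg_nonneg add_nonneg_nonneg) (auto simp: y0)
        have "ennreal (C / (Im z)\<^sup>2 * (1 + \<omega>\<^sup>2)) = ennreal (C / (Im z)\<^sup>2) * ennreal (1 + \<omega>\<^sup>2)"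
          by (rule ennreal_mult[OF C0]) simp
        also have "ennreal (1 + \<omega>\<^sup>2) = 1 + ennreal (\<omega>\<^sup>2)" by (simp add: ennreal_plus)
        finally show ?thesis by (simp only: power2_abs)
      qed
      finally show "ennreal (G \<omega>) \<le> ennreal (C / \<bar>Im z\<bar>\<^sup>2) * (1 + ennreal (\<omega>\<^sup>2))" .
    qed
    also have "\<dots> = ennreal (C / \<bar>Im z\<bar>\<^sup>2) * (\<integral>\<^sup>+ \<omega>. (1 + ennreal (\<omega>\<^sup>2)) \<partial>g)"
      by (rule nn_integral_cmult) (simp add: mg)
    also have "(\<integral>\<^sup>+ \<omega>. (1 + ennreal (\<omega>\<^sup>2)) \<partial>g) = (\<integral>\<^sup>+ \<omega>. 1 \<partial>g) + (\<integral>\<^sup>+ \<omega>. ennreal (\<omega>\<^sup>2) \<partial>g)"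
      by (rule nn_integral_add) (auto simp: mg)
    also have "(\<integral>\<^sup>+ \<omega>. 1 \<partial>g) = 1" by (simp add: emeasure_space_1)
    finally show "ennreal (cmod (Pfun g \<beta> \<sigma> z) + cmod (deriv (Pfun g \<beta> \<sigma>) z))
             \<le> (1 + (\<integral>\<^sup>+ \<omega>. ennreal (\<omega>\<^sup>2) \<partial>g)) * ennreal (C / \<bar>Im z\<bar>\<^sup>2)"
      by (simp add: mult.commute)
  qed
qed

end
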